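(* Let $X_1,X_2,\dots$ be iid random variables with a light right tail, $S_k=X_1+\dots+X_k$, and let $Y$ be independent of $(X_k)$ and satisfy condition $(\mathrm{P})$ with constant $a>0$. In case (ii) of the light-tail definition (i.e. $X_1\le A$ a.s. and $P(X_1>\alpha)>0$) assume additionally $a\le\alpha$. Then for every $k\ge1$, $$\lim_{u\to\infty}\frac{P(Y+S_k>u)}{P(Y+S_{k+1}>u)}=0.$$
   Context: A random variable $X$ has a light right tail if either (i) $P(X>u)>0$ for all $u>0$ and $\lim_{u\to\infty}P(X_1>u)/P(X_1+X_2>u)=0$, where $X_1,X_2$ are independent copies of $X$; or (ii) there are constants $A>0,\alpha>0$ with $X\le A$ a.s. and $P(X>\alpha)>0$. A random variable $Y$ satisfies condition $(\mathrm{P})$ with constant $a>0$ if $P(Y>u)>0$ for all $u>0$ and $\lim_{u\to\infty}P(Y>u+a)/P(Y>u)=0$. *)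

theory Defs
  imports "HOL-Probability.Probability"
begin

text \<open>Case (i) of the light right tail definition, stated for the distribution mu of X.
  The sum of two independent copies of X has distribution mu convolved with mu.\<close>
definition light_tail_i :: "real measure \<Rightarrow> bool" where
  "light_tail_i \<mu> \<longleftrightarrow>
     (\<forall>u>0. measure \<mu> {u<..} > 0) \<and>
     ((\<lambda>u. measure \<mu> {u<..} / measure (\<mu> \<star> \<mu>) {u<..}) \<longlongrightarrow> 0) at_top"

definition light_tail_ii :: "real measure \<Rightarrow> real \<Rightarrow> real \<Rightarrow> bool" where
  "light_tail_ii \<mu> A \<alpha> \<longleftrightarrow>
     A > 0 \<and> \<alpha> > 0 \<and> (AE x in \<mu>. x \<le> A) \<and> measure \<mu> {\<alpha><..} > 0"

definition light_right_tail :: "real measure \<Rightarrow> bool" where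
  "light_right_tail \<mu> \<longleftrightarrow> light_tail_i \<mu> \<or> (\<exists>A \<alpha>. light_tail_ii \<mu> A \<alpha>)"

definition cond_P :: "real measure \<Rightarrow> real \<Rightarrow> bool" where
  "cond_P \<nu> a \<longleftrightarrow> a > 0 \<and>
     (\<forall>u>0. measure \<nu> {u<..} > 0) \<and>
     ((\<lambda>u. measure \<nu> {u + a<..} / measure \<nu> {u<..}) \<longlongrightarrow> 0) at_top"

end

theory Submission imports Defs begin

lemma tail_conv:
  fixes \<nu> \<mu> :: "real measure"
  assumes "finite_measure \<nu>" "finite_measure \<mu>" "sets \<nu> = sets borel" "sets \<mu> = sets borel"
  shows "emeasure (\<nu> \<star> \<mu>) {u<..} = (\<integral>\<^sup>+x. emeasure \<mu> {u - x<..} \<partial>\<nu>)"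
proof -
  have sp: "space \<nu> = space borel" "space \<mu> = space borel"
    using sets_eq_imp_space_eq[OF assms(3)] sets_eq_imp_space_eq[OF assms(4)] by auto
  have "emeasure (\<nu> \<star> \<mu>) {u<..} = (\<integral>\<^sup>+x. emeasure \<mu> {a. a + x \<in> {u<..}} \<partial>\<nu>)"
    by (rule convolution_emeasure) (use assms sp in auto)
  also have "\<dots> = (\<integral>\<^sup>+x. emeasure \<mu> {u - x<..} \<partial>\<nu>)"
    by (intro nn_integral_cong arg_cong[where f="emeasure \<mu>"]) auto
  finally show ?thesis .
qed

lemma tail_lower:
  fixes \<nu> \<mu> :: "real measure"
  assumes "finite_measure \<nu>" "finite_measure \<mu>" "sets \<nu> = sets borel" "sets \<mu> = sets borel"
  shows "emeasure \<mu> {c<..} * emeasure \<nu> {u - c<..} \<le> emeasure (\<nu> \<star> \<mu>) {u<..}"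
proof -
  have "(\<nu> \<star> \<mu>) = (\<mu> \<star> \<nu>)" using assms by (intro convolution_commutative) auto
  hence "emeasure (\<nu> \<star> \<mu>) {u<..} = (\<integral>\<^sup>+x. emeasure \<nu> {u - x<..} \<partial>\<mu>)"
    using tail_conv[of \<mu> \<nu> u] assms by simp
  also have "\<dots> \<ge> (\<integral>\<^sup>+x. emeasure \<nu> {u - c<..} * indicator {c<..} x \<partial>\<mu>)"
  proof (intro nn_integral_mono)
    fix x show "emeasure \<nu> {u - c<..} * indicator {c<..} x \<le> emeasure \<nu> {u - x<..}"
    proof (cases "c < x")
      case True
      hence "{u - c<..} \<subseteq> {u - x<..}" by auto
      moreover have "{u - x<..} \<in> sets \<nu>" using assms by auto
      ultimately show ?thesis using True by (auto intro: emeasure_mono)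
    qed auto
  qed
  also have "(\<integral>\<^sup>+x. emeasure \<nu> {u - c<..} * indicator {c<..} x \<partial>\<mu>) = emeasure \<nu> {u - c<..} * emeasure \<mu> {c<..}"
    using assms by (subst nn_integral_cmult_indicator) auto
  finally show ?thesis by (simp add: mult.commute)
qed

lemma prob_conv:
  fixes \<nu> \<mu> :: "real measure"
  assumes "prob_space \<nu>" "prob_space \<mu>" "sets \<nu> = sets borel" "sets \<mu> = sets borel"
  shows "prob_space (\<nu> \<star> \<mu>)"
proof -
  interpret P: pair_prob_space \<nu> \<mu>
    using assms by (simp add: pair_prob_space_def pair_sigma_finite_def prob_space_imp_sigma_finite)
  have s: "sets (\<nu> \<Otimes>\<^sub>M \<mu>) = sets (borel \<Otimes>\<^sub>M borel)"
    by (rule sets_pair_measure_cong) (fact assms(3), fact assms(4))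
  have "(\<lambda>(x::real,y::real). x + y) \<in> borel_measurable (borel \<Otimes>\<^sub>M borel)" by measurable
  hence m: "(\<lambda>(x::real,y::real). x + y) \<in> borel_measurable (\<nu> \<Otimes>\<^sub>M \<mu>)"
    unfolding measurable_cong_sets[OF s refl] .
  show ?thesis unfolding convolution_def
    by (rule prob_space.prob_space_distr[OF P.prob_space_axioms m])
qed

lemma meas_tail:
  fixes N :: "real measure"
  assumes "finite_measure N" "sets N = sets borel" "sets K = sets borel"
  shows "(\<lambda>w. emeasure N {u - w<..}) \<in> borel_measurable K"
proof -
  interpret finite_measure N by fact
  have "mono (\<lambda>w. measure N {u - w<..})"
  proof (rule monoI)
    fix x y :: real assume "x \<le> y"
    hence "{u - x<..} \<subseteq> {u - y<..}" by auto
    thus "measure N {u - x<..} \<le> measure N {u - y<..}"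
      by (rule finite_measure_mono) (simp add: assms(2))
  qed
  hence "(\<lambda>w. measure N {u - w<..}) \<in> borel_measurable borel"
    by (rule borel_measurable_mono)
  hence "(\<lambda>w. ennreal (measure N {u - w<..})) \<in> borel_measurable borel" by (rule measurable_compose) simp
  moreover have "(\<lambda>w. emeasure N {u - w<..}) = (\<lambda>w. ennreal (measure N {u - w<..}))"
    by (auto simp: emeasure_eq_measure)
  ultimately have "(\<lambda>w. emeasure N {u - w<..}) \<in> borel_measurable borel" by simp
  thus ?thesis unfolding measurable_cong_sets[OF assms(3) refl] .
qed

definition relE :: "(real \<Rightarrow> ennreal) \<Rightarrow> (real \<Rightarrow> ennreal) \<Rightarrow> bool" where
  "relE f g \<longleftrightarrow> (\<forall>\<epsilon>>0. eventually (\<lambda>u. f u \<le> ennreal \<epsilon> * g u) at_top)"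

definition shiftE :: "real measure \<Rightarrow> real \<Rightarrow> bool" where
  "shiftE \<nu> c \<longleftrightarrow> (\<forall>\<epsilon>>0. eventually (\<lambda>u. emeasure \<nu> {u + c<..} \<le> ennreal \<epsilon> * emeasure \<nu> {u<..}) at_top)"

lemma shift_step:
  fixes \<nu> \<mu> :: "real measure"
  assumes "prob_space \<nu>" "prob_space \<mu>" "sets \<nu> = sets borel" "sets \<mu> = sets borel"
    and "AE x in \<mu>. x \<le> A" and "shiftE \<nu> c"
  shows "shiftE (\<nu> \<star> \<mu>) c"
proof -
  have fin: "finite_measure \<nu>" "finite_measure \<mu>" using assms by (auto simp: prob_space_def)
  have "(\<nu> \<star> \<mu>) = (\<mu> \<star> \<nu>)" using assms fin by (intro convolution_commutative) auto
  hence T: "\<And>u. emeasure (\<nu> \<star> \<mu>) {u<..} = (\<integral>\<^sup>+x. emeasure \<nu> {u - x<..} \<partial>\<mu>)"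
    using tail_conv[of \<mu> \<nu>] assms fin by simp
  show ?thesis unfolding shiftE_def
  proof (intro allI impI)
    fix \<epsilon> :: real assume "\<epsilon> > 0"
    from assms(6) obtain U where U: "\<And>v. v \<ge> U \<Longrightarrow> emeasure \<nu> {v + c<..} \<le> ennreal \<epsilon> * emeasure \<nu> {v<..}"
      unfolding shiftE_def eventually_at_top_linorder using \<open>\<epsilon>>0\<close> by blast
    show "eventually (\<lambda>u. emeasure (\<nu> \<star> \<mu>) {u + c<..} \<le> ennreal \<epsilon> * emeasure (\<nu> \<star> \<mu>) {u<..}) at_top"
      unfolding eventually_at_top_linorder
    proof (intro exI[of _ "U + A"] allI impI)
      fix u assume u: "u \<ge> U + A"
      have "emeasure (\<nu> \<star> \<mu>) {u + c<..} = (\<integral>\<^sup>+x. emeasure \<nu> {u + c - x<..} \<partial>\<mu>)" by (rule T)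
      also have "\<dots> \<le> (\<integral>\<^sup>+x. ennreal \<epsilon> * emeasure \<nu> {u - x<..} \<partial>\<mu>)"
      proof (rule nn_integral_mono_AE)
        show "AE x in \<mu>. emeasure \<nu> {u + c - x<..} \<le> ennreal \<epsilon> * emeasure \<nu> {u - x<..}"
          using assms(5)
        proof eventually_elim
          case (elim x)
          hence "u - x \<ge> U" using u by simp
          from U[OF this] show ?case by (simp add: algebra_simps)
        qed
      qed
      also have "\<dots> = ennreal \<epsilon> * (\<integral>\<^sup>+x. emeasure \<nu> {u - x<..} \<partial>\<mu>)"
        by (rule nn_integral_cmult) (rule meas_tail; use fin assms in auto)
      also have "\<dots> = ennreal \<epsilon> * emeasure (\<nu> \<star> \<mu>) {u<..}" by (simp add: T)
      finally show "emeasure (\<nu> \<star> \<mu>) {u + c<..} \<le> ennreal \<epsilon> * emeasure (\<nu> \<star> \<mu>) {u<..}" .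
    qed
  qed
qed

lemma shift_rel:
  fixes \<nu> \<mu> :: "real measure"
  assumes "prob_space \<nu>" "prob_space \<mu>" "sets \<nu> = sets borel" "sets \<mu> = sets borel"
    and "measure \<mu> {c<..} > 0" and "shiftE \<nu> c"
  shows "relE (\<lambda>u. emeasure \<nu> {u<..}) (\<lambda>u. emeasure (\<nu> \<star> \<mu>) {u<..})"
  unfolding relE_def
proof (intro allI impI)
  have fin: "finite_measure \<nu>" "finite_measure \<mu>" using assms by (auto simp: prob_space_def)
  fix \<epsilon> :: real assume "\<epsilon> > 0"
  define p where "p = measure \<mu> {c<..}"
  have p: "p > 0" "emeasure \<mu> {c<..} = ennreal p"
    using assms(5) fin by (auto simp: p_def finite_measure.emeasure_eq_measure)
  from assms(6) obtain U where U: "\<And>v. v \<ge> U \<Longrightarrow> emeasure \<nu> {v + c<..} \<le> ennreal (\<epsilon> * p) * emeasure \<nu> {v<..}"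
    unfolding shiftE_def eventually_at_top_linorder using \<open>\<epsilon>>0\<close> p by (meson mult_pos_pos)
  show "eventually (\<lambda>u. emeasure \<nu> {u<..} \<le> ennreal \<epsilon> * emeasure (\<nu> \<star> \<mu>) {u<..}) at_top"
    unfolding eventually_at_top_linorder
  proof (intro exI[of _ "U + c"] allI impI)
    fix u assume u: "u \<ge> U + c"
    have "emeasure \<nu> {u<..} = emeasure \<nu> {(u - c) + c<..}" by simp
    also have "\<dots> \<le> ennreal (\<epsilon> * p) * emeasure \<nu> {u - c<..}" using U[of "u - c"] u by simp
    also have "\<dots> = ennreal \<epsilon> * (emeasure \<mu> {c<..} * emeasure \<nu> {u - c<..})"
      using p \<open>\<epsilon>>0\<close> by (simp add: ennreal_mult mult.assoc)
    also have "\<dots> \<le> ennreal \<epsilon> * emeasure (\<nu> \<star> \<mu>) {u<..}"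
      by (intro mult_left_mono tail_lower) (use fin assms in auto)
    finally show "emeasure \<nu> {u<..} \<le> ennreal \<epsilon> * emeasure (\<nu> \<star> \<mu>) {u<..}" .
  qed
qed

lemma light_step:
  fixes \<nu> \<mu> :: "real measure"
  assumes pn: "prob_space \<nu>" and pm: "prob_space \<mu>" and sn: "sets \<nu> = sets borel" and sm: "sets \<mu> = sets borel"
    and lt: "relE (\<lambda>u. emeasure \<mu> {u<..}) (\<lambda>u. emeasure (\<mu> \<star> \<mu>) {u<..})"
    and pos: "\<And>u. measure \<mu> {u<..} > 0"
    and r: "relE (\<lambda>u. emeasure \<nu> {u<..}) (\<lambda>u. emeasure (\<nu> \<star> \<mu>) {u<..})"
  shows "relE (\<lambda>u. emeasure (\<nu> \<star> \<mu>) {u<..}) (\<lambda>u. emeasure ((\<nu> \<star> \<mu>) \<star> \<mu>) {u<..})"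
  unfolding relE_def
proof (intro allI impI)
  have fin: "finite_measure \<nu>" "finite_measure \<mu>" using pn pm by (auto simp: prob_space_def)
  have pc: "prob_space (\<nu> \<star> \<mu>)" "prob_space (\<mu> \<star> \<mu>)" using prob_conv pn pm sn sm by auto
  hence finc: "finite_measure (\<nu> \<star> \<mu>)" "finite_measure (\<mu> \<star> \<mu>)" by (auto simp: prob_space_def)
  have assoc: "(\<nu> \<star> (\<mu> \<star> \<mu>)) = ((\<nu> \<star> \<mu>) \<star> \<mu>)"
    by (rule convolution_associative) (use fin sn sm in auto)
  fix \<epsilon> :: real assume "\<epsilon> > 0"
  define \<delta> where "\<delta> = \<epsilon> / 2"
  have d: "\<delta> > 0" using \<open>\<epsilon>>0\<close> by (simp add: \<delta>_def)
  from lt obtain L where L: "\<And>v. v \<ge> L \<Longrightarrow> emeasure \<mu> {v<..} \<le> ennreal \<delta> * emeasure (\<mu> \<star> \<mu>) {v<..}"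
    unfolding relE_def eventually_at_top_linorder using d by blast
  define p where "p = measure \<mu> {L<..}"
  have p: "p > 0" "emeasure \<mu> {L<..} = ennreal p"
    using pos fin by (auto simp: p_def finite_measure.emeasure_eq_measure)
  from r obtain U where U: "\<And>v. v \<ge> U \<Longrightarrow> emeasure \<nu> {v<..} \<le> ennreal (\<delta> * p) * emeasure (\<nu> \<star> \<mu>) {v<..}"
    unfolding relE_def eventually_at_top_linorder using d p by (meson mult_pos_pos)
  show "eventually (\<lambda>u. emeasure (\<nu> \<star> \<mu>) {u<..} \<le> ennreal \<epsilon> * emeasure ((\<nu> \<star> \<mu>) \<star> \<mu>) {u<..}) at_top"
    unfolding eventually_at_top_linorder
  proof (intro exI[of _ "U + L"] allI impI)
    fix u assume u: "u \<ge> U + L"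
    define G where "G = emeasure ((\<nu> \<star> \<mu>) \<star> \<mu>) {u<..}"
    have "emeasure (\<nu> \<star> \<mu>) {u<..} = (\<integral>\<^sup>+w. emeasure \<mu> {u - w<..} \<partial>\<nu>)"
      by (rule tail_conv) (use fin sn sm in auto)
    also have "\<dots> \<le> (\<integral>\<^sup>+w. ennreal \<delta> * emeasure (\<mu> \<star> \<mu>) {u - w<..} + indicator {u - L<..} w \<partial>\<nu>)"
    proof (rule nn_integral_mono)
      fix w
      show "emeasure \<mu> {u - w<..} \<le> ennreal \<delta> * emeasure (\<mu> \<star> \<mu>) {u - w<..} + indicator {u - L<..} w"
      proof (cases "w > u - L")
        case True
        have "emeasure \<mu> {u - w<..} \<le> 1" using pm by (rule prob_space.emeasure_le_1)
        also have "\<dots> \<le> ennreal \<delta> * emeasure (\<mu> \<star> \<mu>) {u - w<..} + indicator {u - L<..} w"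
          using True by simp
        finally show ?thesis .
      next
        case False
        hence "u - w \<ge> L" by simp
        from L[OF this] show ?thesis by (simp add: add_increasing2)
      qed
    qed
    also have "\<dots> = (\<integral>\<^sup>+w. ennreal \<delta> * emeasure (\<mu> \<star> \<mu>) {u - w<..} \<partial>\<nu>) + (\<integral>\<^sup>+w. indicator {u - L<..} w \<partial>\<nu>)"
      by (rule nn_integral_add) (use meas_tail[OF finc(2) _ sn] sn in auto)
    also have "(\<integral>\<^sup>+w. ennreal \<delta> * emeasure (\<mu> \<star> \<mu>) {u - w<..} \<partial>\<nu>) = ennreal \<delta> * (\<integral>\<^sup>+w. emeasure (\<mu> \<star> \<mu>) {u - w<..} \<partial>\<nu>)"
      by (rule nn_integral_cmult) (use meas_tail[OF finc(2) _ sn] in auto)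
    also have "(\<integral>\<^sup>+w. emeasure (\<mu> \<star> \<mu>) {u - w<..} \<partial>\<nu>) = G"
      unfolding G_def assoc[symmetric] by (rule tail_conv[symmetric]) (use fin finc sn sm in auto)
    also have "(\<integral>\<^sup>+w. indicator {u - L<..} w \<partial>\<nu>) = emeasure \<nu> {u - L<..}"
      using sn by simp
    also have "emeasure \<nu> {u - L<..} \<le> ennreal (\<delta> * p) * emeasure (\<nu> \<star> \<mu>) {u - L<..}"
      using U u by simp
    also have "\<dots> = ennreal \<delta> * (emeasure \<mu> {L<..} * emeasure (\<nu> \<star> \<mu>) {u - L<..})"
      using p d by (simp add: ennreal_mult mult.assoc)
    also have "\<dots> \<le> ennreal \<delta> * G"
      unfolding G_def by (intro mult_left_mono tail_lower) (use finc fin sm in auto)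
    also have "ennreal \<delta> * G + ennreal \<delta> * G = ennreal \<epsilon> * G"
      using d by (simp add: \<delta>_def distrib_right[symmetric] ennreal_plus[symmetric] del: ennreal_plus)
    finally show "emeasure (\<nu> \<star> \<mu>) {u<..} \<le> ennreal \<epsilon> * emeasure ((\<nu> \<star> \<mu>) \<star> \<mu>) {u<..}"
      unfolding G_def by simp
  qed
qed

lemma ratio_le:
  fixes f g :: "real \<Rightarrow> real"
  assumes "((\<lambda>u. f u / g u) \<longlongrightarrow> 0) at_top" "eventually (\<lambda>u. g u > 0) at_top" "\<epsilon> > 0"
  shows "eventually (\<lambda>u. f u \<le> \<epsilon> * g u) at_top"
proof -
  have "eventually (\<lambda>u. f u / g u < \<epsilon>) at_top" using order_tendstoD(2)[OF assms(1,3)] .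
  with assms(2) show ?thesis
  proof eventually_elim
    case (elim u) thus ?case by (simp add: divide_less_eq)
  qed
qed

lemma cond_shift:
  fixes \<nu> :: "real measure"
  assumes "prob_space \<nu>" "sets \<nu> = sets borel" "cond_P \<nu> a" "a \<le> \<alpha>"
  shows "shiftE \<nu> \<alpha>"
  unfolding shiftE_def
proof (intro allI impI)
  interpret prob_space \<nu> by fact
  fix \<epsilon> :: real assume e: "\<epsilon> > 0"
  have "eventually (\<lambda>u. u > (0::real)) at_top" by (rule eventually_gt_at_top)
  hence pos: "eventually (\<lambda>u. measure \<nu> {u<..} > 0) at_top"
    by eventually_elim (use assms(3) in \<open>simp add: cond_P_def\<close>)
  have "eventually (\<lambda>u. measure \<nu> {u + a<..} \<le> \<epsilon> * measure \<nu> {u<..}) at_top"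
    by (rule ratio_le[OF _ pos e]) (use assms(3) in \<open>simp add: cond_P_def\<close>)
  thus "eventually (\<lambda>u. emeasure \<nu> {u + \<alpha><..} \<le> ennreal \<epsilon> * emeasure \<nu> {u<..}) at_top"
  proof eventually_elim
    case (elim u)
    have "emeasure \<nu> {u + \<alpha><..} \<le> emeasure \<nu> {u + a<..}"
      by (rule emeasure_mono) (use assms in auto)
    also have "\<dots> = ennreal (measure \<nu> {u + a<..})" by (simp add: emeasure_eq_measure)
    also have "\<dots> \<le> ennreal (\<epsilon> * measure \<nu> {u<..})" using elim by (rule ennreal_leI)
    also have "\<dots> = ennreal \<epsilon> * emeasure \<nu> {u<..}" using e by (simp add: ennreal_mult emeasure_eq_measure)
    finally show ?case .
  qed
qed

lemma lt_rel:
  fixes \<mu> :: "real measure"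
  assumes pm: "prob_space \<mu>" and sm: "sets \<mu> = sets borel" and lt: "light_tail_i \<mu>"
  shows "relE (\<lambda>u. emeasure \<mu> {u<..}) (\<lambda>u. emeasure (\<mu> \<star> \<mu>) {u<..})"
  unfolding relE_def
proof (intro allI impI)
  interpret prob_space \<mu> by fact
  have pc: "prob_space (\<mu> \<star> \<mu>)" using prob_conv pm sm by auto
  hence finc: "finite_measure (\<mu> \<star> \<mu>)" by (simp add: prob_space_def)
  fix \<epsilon> :: real assume e: "\<epsilon> > 0"
  have p1: "measure \<mu> {1<..} > 0" using lt by (simp add: light_tail_i_def)
  have p0: "measure \<mu> {0<..} > 0"
    using p1 finite_measure_mono[of "{1<..}" "{0<..}"] sm by auto
  have pos: "eventually (\<lambda>u. measure (\<mu> \<star> \<mu>) {u<..} > 0) at_top"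
    using eventually_gt_at_top[of 0]
  proof eventually_elim
    case (elim u)
    have pu: "measure \<mu> {u<..} > 0" using lt elim by (simp add: light_tail_i_def)
    have "emeasure \<mu> {0<..} * emeasure \<mu> {u - 0<..} \<le> emeasure (\<mu> \<star> \<mu>) {u<..}"
      by (rule tail_lower) (use sm finite_measure_axioms in auto)
    moreover have "emeasure \<mu> {0<..} * emeasure \<mu> {u - 0<..} > 0"
      using pu p0 by (simp add: emeasure_eq_measure ennreal_zero_less_mult_iff)
    ultimately have "emeasure (\<mu> \<star> \<mu>) {u<..} > 0" by simp
    thus ?case using finite_measure.emeasure_eq_measure[OF finc] by simp
  qed
  have "eventually (\<lambda>u. measure \<mu> {u<..} \<le> \<epsilon> * measure (\<mu> \<star> \<mu>) {u<..}) at_top"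
    by (rule ratio_le[OF _ pos e]) (use lt in \<open>simp add: light_tail_i_def\<close>)
  thus "eventually (\<lambda>u. emeasure \<mu> {u<..} \<le> ennreal \<epsilon> * emeasure (\<mu> \<star> \<mu>) {u<..}) at_top"
  proof eventually_elim
    case (elim u)
    have "emeasure \<mu> {u<..} = ennreal (measure \<mu> {u<..})" by (simp add: emeasure_eq_measure)
    also have "\<dots> \<le> ennreal (\<epsilon> * measure (\<mu> \<star> \<mu>) {u<..})" using elim by (rule ennreal_leI)
    also have "\<dots> = ennreal \<epsilon> * emeasure (\<mu> \<star> \<mu>) {u<..}"
      using e by (simp add: ennreal_mult finite_measure.emeasure_eq_measure[OF finc])
    finally show ?case .
  qed
qed

lemma rel_ratio:
  fixes N N' :: "real measure"
  assumes "finite_measure N" "finite_measure N'"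
    and r: "relE (\<lambda>u. emeasure N {u<..}) (\<lambda>u. emeasure N' {u<..})"
  shows "((\<lambda>u. measure N {u<..} / measure N' {u<..}) \<longlongrightarrow> 0) at_top"
proof (rule tendstoI)
  fix e :: real assume e: "e > 0"
  have "eventually (\<lambda>u. emeasure N {u<..} \<le> ennreal (e/2) * emeasure N' {u<..}) at_top"
    using r e unfolding relE_def by simp
  thus "eventually (\<lambda>u. dist (measure N {u<..} / measure N' {u<..}) 0 < e) at_top"
  proof eventually_elim
    case (elim u)
    hence "ennreal (measure N {u<..}) \<le> ennreal (e/2) * ennreal (measure N' {u<..})"
      using e assms(1,2) by (simp add: finite_measure.emeasure_eq_measure)
    also have "\<dots> = ennreal (e/2 * measure N' {u<..})"
      using e by (intro ennreal_mult[symmetric]) auto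
    finally have "ennreal (measure N {u<..}) \<le> ennreal (e/2 * measure N' {u<..})" .
    hence le: "measure N {u<..} \<le> e/2 * measure N' {u<..}"
      using e by (subst (asm) ennreal_le_iff) auto
    show ?case
    proof (cases "measure N' {u<..} = 0")
      case True thus ?thesis using e by simp
    next
      case False
      hence "measure N' {u<..} > 0" by (simp add: zero_less_measure_iff)
      hence "measure N {u<..} / measure N' {u<..} \<le> e/2" using le by (simp add: divide_le_eq)
      moreover have "measure N {u<..} / measure N' {u<..} \<ge> 0" by simp
      ultimately show ?thesis using e unfolding dist_real_def
        by (metis abs_of_nonneg diff_zero field_sum_of_halves half_gt_zero_iff less_add_same_cancel1 order_le_less_trans)
    qed
  qed
qed

theorem lemma2:
  fixes M :: "'a measure" and X :: "nat \<Rightarrow> 'a \<Rightarrow> real" and Y :: "'a \<Rightarrow> real" and a :: real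
  assumes "prob_space M"
    and "\<And>i. X i \<in> borel_measurable M"
    and "Y \<in> borel_measurable M"
    and "prob_space.indep_vars M (\<lambda>_. borel) (\<lambda>i. if i = 0 then Y else X i) UNIV"
    and "\<And>i. i \<ge> 1 \<Longrightarrow> distr M borel (X i) = distr M borel (X 1)"
    and "cond_P (distr M borel Y) a"
    and "light_tail_i (distr M borel (X 1)) \<or>
         (\<exists>A \<alpha>. light_tail_ii (distr M borel (X 1)) A \<alpha> \<and> a \<le> \<alpha>)"
    and "k \<ge> 1"
  shows "((\<lambda>u. measure M {\<omega> \<in> space M. Y \<omega> + (\<Sum>i=1..k. X i \<omega>) > u}
              / measure M {\<omega> \<in> space M. Y \<omega> + (\<Sum>i=1..Suc k. X i \<omega>) > u}) \<longlongrightarrow> 0) at_top"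
proof -
  interpret prob_space M by fact
  define W where "W = (\<lambda>i. if i = 0 then Y else X i)"
  define Z where "Z = (\<lambda>k \<omega>. \<Sum>i\<in>{0..k}. W i \<omega>)"
  define \<mu> where "\<mu> = distr M borel (X 1)"
  define \<nu> where "\<nu> = (\<lambda>k. distr M borel (Z k))"
  have mW[measurable]: "\<And>i. W i \<in> borel_measurable M" using assms(2,3) by (simp add: W_def)
  have mZ[measurable]: "\<And>k. Z k \<in> borel_measurable M" unfolding Z_def by measurable
  have pm: "prob_space \<mu>" and sm: "sets \<mu> = sets borel"
    unfolding \<mu>_def using assms(2) by (auto intro!: prob_space_distr)
  have pn: "\<And>k. prob_space (\<nu> k)" and sn: "\<And>k. sets (\<nu> k) = sets borel"
    unfolding \<nu>_def by (auto intro!: prob_space_distr)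
  have fm: "finite_measure \<mu>" "\<And>k. finite_measure (\<nu> k)" using pm pn by (auto simp: prob_space_def)
  have Zeq: "\<And>k \<omega>. Z k \<omega> = Y \<omega> + (\<Sum>i=1..k. X i \<omega>)"
  proof -
    fix k \<omega>
    have "Z k \<omega> = W 0 \<omega> + (\<Sum>i=Suc 0..k. W i \<omega>)" unfolding Z_def by (rule sum.atLeast_Suc_atMost) simp
    also have "(\<Sum>i=Suc 0..k. W i \<omega>) = (\<Sum>i=1..k. X i \<omega>)" by (intro sum.cong) (auto simp: W_def)
    finally show "Z k \<omega> = Y \<omega> + (\<Sum>i=1..k. X i \<omega>)" by (simp add: W_def)
  qed
  have nu0: "\<nu> 0 = distr M borel Y"
    unfolding \<nu>_def by (rule arg_cong[where f="distr M borel"]) (auto simp: Z_def W_def)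
  have conv: "\<And>k. \<nu> (Suc k) = (\<nu> k \<star> \<mu>)"
  proof -
    fix k
    have ind: "indep_var borel (W (Suc k)) borel (\<lambda>\<omega>. \<Sum>i\<in>{0..k}. W i \<omega>)"
      by (rule indep_vars_sum) (use indep_vars_subset[OF assms(4)[unfolded W_def[symmetric]]] in auto)
    have "Z (Suc k) = (\<lambda>\<omega>. W (Suc k) \<omega> + Z k \<omega>)" by (auto simp: Z_def)
    hence "\<nu> (Suc k) = distr M borel (\<lambda>\<omega>. W (Suc k) \<omega> + Z k \<omega>)" by (simp add: \<nu>_def)
    also have "\<dots> = (distr M borel (W (Suc k)) \<star> \<nu> k)"
      unfolding \<nu>_def by (rule sum_indep_random_variable) (use ind in \<open>auto simp: Z_def\<close>)
    also have "distr M borel (W (Suc k)) = \<mu>" using assms(5)[of "Suc k"] by (simp add: W_def \<mu>_def)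
    also have "(\<mu> \<star> \<nu> k) = (\<nu> k \<star> \<mu>)" by (rule convolution_commutative) (use fm sm sn in auto)
    finally show "\<nu> (Suc k) = (\<nu> k \<star> \<mu>)" .
  qed
  have tail: "\<And>k u. measure M {\<omega> \<in> space M. Y \<omega> + (\<Sum>i=1..k. X i \<omega>) > u} = measure (\<nu> k) {u<..}"
  proof -
    fix k u
    have "measure (\<nu> k) {u<..} = measure M (Z k -` {u<..} \<inter> space M)"
      unfolding \<nu>_def by (rule measure_distr) auto
    also have "Z k -` {u<..} \<inter> space M = {\<omega> \<in> space M. Y \<omega> + (\<Sum>i=1..k. X i \<omega>) > u}"
      by (auto simp: Zeq)
    finally show "measure M {\<omega> \<in> space M. Y \<omega> + (\<Sum>i=1..k. X i \<omega>) > u} = measure (\<nu> k) {u<..}" by simp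
  qed
  have cP: "cond_P (\<nu> 0) a" using assms(6) nu0 by simp
  have apos: "a > 0" using cP by (simp add: cond_P_def)
  have rel: "relE (\<lambda>u. emeasure (\<nu> k) {u<..}) (\<lambda>u. emeasure (\<nu> (Suc k)) {u<..})"
    using assms(7) unfolding \<mu>_def[symmetric]
  proof
    assume lt: "light_tail_i \<mu>"
    have pos: "\<And>u. measure \<mu> {u<..} > 0"
    proof -
      fix u :: real
      have p: "measure \<mu> {max u 1<..} > 0" using lt by (simp add: light_tail_i_def)
      have "measure \<mu> {max u 1<..} \<le> measure \<mu> {u<..}"
        by (rule finite_measure.finite_measure_mono[OF fm(1)]) (auto simp: sm)
      thus "measure \<mu> {u<..} > 0" using p by simp
    qed
    have ltr: "relE (\<lambda>u. emeasure \<mu> {u<..}) (\<lambda>u. emeasure (\<mu> \<star> \<mu>) {u<..})"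
      by (rule lt_rel[OF pm sm lt])
    show ?thesis
    proof (induction k)
      case 0
      have "shiftE (\<nu> 0) a" by (rule cond_shift[OF pn sn cP]) simp
      from shift_rel[OF pn pm sn sm pos this] show ?case by (simp add: conv)
    next
      case (Suc k)
      from light_step[OF pn pm sn sm ltr pos Suc[unfolded conv]] show ?case by (simp add: conv)
    qed
  next
    assume "\<exists>A \<alpha>. light_tail_ii \<mu> A \<alpha> \<and> a \<le> \<alpha>"
    then obtain A \<alpha> where lt: "light_tail_ii \<mu> A \<alpha>" and al: "a \<le> \<alpha>" by blast
    have AE: "AE x in \<mu>. x \<le> A" and pa: "measure \<mu> {\<alpha><..} > 0"
      using lt by (auto simp: light_tail_ii_def)
    have sh: "shiftE (\<nu> j) \<alpha>" for j
    proof (induction j)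
      case 0 show ?case by (rule cond_shift[OF pn sn cP al])
    next
      case (Suc j)
      from shift_step[OF pn pm sn sm AE Suc] show ?case by (simp add: conv)
    qed
    from shift_rel[OF pn pm sn sm pa sh] show ?thesis by (simp add: conv)
  qed
  show ?thesis unfolding tail by (rule rel_ratio[OF fm(2) fm(2) rel])
qed

end
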